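(* Let $(E,\mathcal{E},\nu)$ be a $\sigma$-finite measure space, let $\phi$ be a Young function satisfying the $\Delta_2$-condition, let $w$ be a weight function, and let $\Psi:E\to E$ be a non-singular measurable transformation such that the composition operator $C_\Psi f=f\circ\Psi$ acts on the Orlicz-Lorentz space $L_{(\phi,w)}$. For an integer $m\ge 0$ let $f_{\Psi^m}=\frac{d(\nu\circ\Psi^{-m})}{d\nu}$ and $E_m=\{x\in E: f_{\Psi^m}(x)=0\}$. Then for every $m\ge 0$, $$\mathcal{N}(C_\Psi^m)=L_{(\phi,w)}(E_m),$$ i.e. the kernel of $C_\Psi^m$ consists exactly of those $f\in L_{(\phi,w)}$ with $f(x)=0$ for (almost every) $x\in E\setminus E_m$.
   Context: A Young function is a convex $\phi:[0,\infty)\to[0,\infty)$ with $\phi(x)=0\iff x=0$ and $\lim_{x\to\infty}\phi(x)=\infty$; it satisfies the $\Delta_2$-condition if $\phi(2x)\le k\phi(x)$ for some $k>0$ and all $x>0$. A weight function is a non-increasing locally integrable $w:(0,\infty)\to(0,\infty)$ with $\int_0^\infty w(t)\,dt=\infty$. For measurable $f:E\to\mathbb{C}$, $\nu_f(s)=\nu\{x:|f(x)|>s\}$ and $f^*(t)=\inf\{s>0:\nu_f(s)\le t\}$. The Orlicz-Lorentz space $L_{(\phi,w)}$ is the space of measurable $f$ with $\int_0^\infty\phi(\alpha f^*(t))w(t)\,dt<\infty$ for some $\alpha>0$, normed by $\|f\|=\inf\{\epsilon>0:\int_0^\infty\phi(f^*(t)/\epsilon)w(t)\,dt\le1\}$.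 $\Psi$ is non-singular if $\nu(\Psi^{-1}(S))=0$ whenever $\nu(S)=0$; then each $\Psi^m$ is non-singular and $\nu_m:=\nu\circ\Psi^{-m}$ is absolutely continuous with respect to $\nu$, with Radon–Nikodym derivative $f_{\Psi^m}$ ($\Psi^0$ is the identity). $C_\Psi^m f=f\circ\Psi^m$. For $A\in\mathcal{E}$, $L_{(\phi,w)}(A)$ denotes the set of $f\in L_{(\phi,w)}$ vanishing (a.e.) outside $A$. $\mathcal{N}(T)$ denotes the kernel of $T$. *)

theory Defs
  imports "HOL-Probability.Probability"
begin

definition young_function :: "(real \<Rightarrow> real) \<Rightarrow> bool" where
  "young_function \<phi> \<longleftrightarrow>
     convex_on {0..} \<phi> \<and> (\<forall>x\<ge>0. \<phi> x \<ge> 0) \<and>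
     (\<forall>x\<ge>0. \<phi> x = 0 \<longleftrightarrow> x = 0) \<and> filterlim \<phi> at_top at_top"

definition delta2 :: "(real \<Rightarrow> real) \<Rightarrow> bool" where
  "delta2 \<phi> \<longleftrightarrow> (\<exists>k>0. \<forall>x>0. \<phi> (2 * x) \<le> k * \<phi> x)"

definition weight_function :: "(real \<Rightarrow> real) \<Rightarrow> bool" where
  "weight_function w \<longleftrightarrow>
     (\<forall>s t. 0 < s \<longrightarrow> s \<le> t \<longrightarrow> w t \<le> w s) \<and> (\<forall>t>0. w t > 0) \<and>
     w \<in> borel_measurable lborel \<and>
     (\<forall>t>0. (\<integral>\<^sup>+ x\<in>{0<..t}. ennreal (w x) \<partial>lborel) < \<infinity>) \<and>
     (\<integral>\<^sup>+ x\<in>{0<..}. ennreal (w x) \<partial>lborel) = \<infinity>"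

definition distrib_fun :: "'a measure \<Rightarrow> ('a \<Rightarrow> complex) \<Rightarrow> real \<Rightarrow> ennreal" where
  "distrib_fun M f s = emeasure M {x \<in> space M. norm (f x) > s}"

text \<open>decreasing rearrangement \<open>f^*(t)\<close>, valued in \<open>[0,\<infinity>]\<close> (infimum of the empty set is \<infinity>)\<close>
definition decr_rearr :: "'a measure \<Rightarrow> ('a \<Rightarrow> complex) \<Rightarrow> real \<Rightarrow> ennreal" where
  "decr_rearr M f t = Inf {ennreal s | s. s > 0 \<and> distrib_fun M f s \<le> ennreal t}"

definition OL_modular :: "(real \<Rightarrow> real) \<Rightarrow> (real \<Rightarrow> real) \<Rightarrow> 'a measure \<Rightarrow> real \<Rightarrow> ('a \<Rightarrow> complex) \<Rightarrow> ennreal" where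
  "OL_modular \<phi> w M \<alpha> f =
     (\<integral>\<^sup>+ t\<in>{0<..}. (if decr_rearr M f t = \<infinity> then \<infinity>
                        else ennreal (\<phi> (\<alpha> * enn2real (decr_rearr M f t)) * w t)) \<partial>lborel)"

definition in_OL :: "(real \<Rightarrow> real) \<Rightarrow> (real \<Rightarrow> real) \<Rightarrow> 'a measure \<Rightarrow> ('a \<Rightarrow> complex) \<Rightarrow> bool" where
  "in_OL \<phi> w M f \<longleftrightarrow> f \<in> borel_measurable M \<and> (\<exists>\<alpha>>0. OL_modular \<phi> w M \<alpha> f < \<infinity>)"

definition nonsingular :: "'a measure \<Rightarrow> ('a \<Rightarrow> 'a) \<Rightarrow> bool" where
  "nonsingular M \<Psi> \<longleftrightarrow>
     (\<forall>S\<in>sets M. emeasure M S = 0 \<longrightarrow> emeasure M (\<Psi> -` S \<inter> space M) = 0)"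

definition RN_iter :: "'a measure \<Rightarrow> ('a \<Rightarrow> 'a) \<Rightarrow> nat \<Rightarrow> 'a \<Rightarrow> ennreal" where
  "RN_iter M \<Psi> m = RN_deriv M (distr M M (\<Psi> ^^ m))"

definition E_set :: "'a measure \<Rightarrow> ('a \<Rightarrow> 'a) \<Rightarrow> nat \<Rightarrow> 'a set" where
  "E_set M \<Psi> m = {x \<in> space M. RN_iter M \<Psi> m x = 0}"

text \<open>kernel of \<open>C_\<Psi>^m\<close> on \<open>L_{(\<phi>,w)}\<close> (elements identified up to a.e. equality)\<close>
definition comp_kernel :: "(real \<Rightarrow> real) \<Rightarrow> (real \<Rightarrow> real) \<Rightarrow> 'a measure \<Rightarrow> ('a \<Rightarrow> 'a) \<Rightarrow> nat \<Rightarrow> ('a \<Rightarrow> complex) set" where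
  "comp_kernel \<phi> w M \<Psi> m = {f. in_OL \<phi> w M f \<and> (AE x in M. f ((\<Psi> ^^ m) x) = 0)}"

definition OL_on :: "(real \<Rightarrow> real) \<Rightarrow> (real \<Rightarrow> real) \<Rightarrow> 'a measure \<Rightarrow> 'a set \<Rightarrow> ('a \<Rightarrow> complex) set" where
  "OL_on \<phi> w M A = {f. in_OL \<phi> w M f \<and> (AE x in M. x \<notin> A \<longrightarrow> f x = 0)}"

end

theory Submission
  imports Defs
begin

lemma funpow_meas: "\<Psi> \<in> M \<rightarrow>\<^sub>M M \<Longrightarrow> (\<Psi> ^^ m) \<in> M \<rightarrow>\<^sub>M M"
proof (induction m)
  case 0 then show ?case by simp
next
  case (Suc m)
  have "(\<Psi> ^^ Suc m) = (\<Psi> ^^ m) \<circ> \<Psi>" by (simp only: funpow_Suc_right)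
  then show ?case using Suc measurable_comp by metis
qed

lemma funpow_null:
  assumes P: "\<Psi> \<in> M \<rightarrow>\<^sub>M M" and ns: "nonsingular M \<Psi>"
  shows "S \<in> sets M \<Longrightarrow> emeasure M S = 0 \<Longrightarrow> emeasure M ((\<Psi> ^^ m) -` S \<inter> space M) = 0"
proof (induction m)
  case 0
  then show ?case by (simp add: Int_absorb2 sets.sets_into_space)
next
  case (Suc m)
  define T where "T = (\<Psi> ^^ m) -` S \<inter> space M"
  have T: "T \<in> sets M" unfolding T_def using funpow_meas[OF P] Suc.prems measurable_sets by blast
  have e: "(\<Psi> ^^ Suc m) -` S \<inter> space M = \<Psi> -` T \<inter> space M"
    unfolding T_def using measurable_space[OF P] by (auto simp: funpow_swap1)
  have "emeasure M T = 0" using Suc unfolding T_def by simp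
  then have "emeasure M (\<Psi> -` T \<inter> space M) = 0" using ns T unfolding nonsingular_def by blast
  then show ?case using e by (simp del: funpow.simps)
qed

theorem theorem3p1:
  fixes M :: "'a measure" and \<phi> w :: "real \<Rightarrow> real" and \<Psi> :: "'a \<Rightarrow> 'a" and m :: nat
  assumes "sigma_finite_measure M"
    and "young_function \<phi>" and "delta2 \<phi>"
    and "weight_function w"
    and "\<Psi> \<in> M \<rightarrow>\<^sub>M M" and "nonsingular M \<Psi>"
    and "\<forall>f. in_OL \<phi> w M f \<longrightarrow> in_OL \<phi> w M (f \<circ> \<Psi>)"
  shows "comp_kernel \<phi> w M \<Psi> m = OL_on \<phi> w M (E_set M \<Psi> m)"
proof -
  interpret sigma_finite_measure M by fact
  let ?N = "distr M M (\<Psi> ^^ m)"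
  have Pm: "(\<Psi> ^^ m) \<in> M \<rightarrow>\<^sub>M M" using funpow_meas assms(5) by blast
  have sN: "sets ?N = sets M" by simp
  have ac: "absolutely_continuous M ?N"
    unfolding absolutely_continuous_def
  proof
    fix S assume "S \<in> null_sets M"
    then show "S \<in> null_sets ?N"
      using funpow_null[OF assms(5,6)] Pm by (auto simp: emeasure_distr null_sets_def)
  qed
  have dens: "density M (RN_iter M \<Psi> m) = ?N"
    unfolding RN_iter_def using density_RN_deriv[OF ac sN] .
  have RNm: "RN_iter M \<Psi> m \<in> borel_measurable M" unfolding RN_iter_def by simp
  have key: "(AE x in M. f ((\<Psi> ^^ m) x) = 0) \<longleftrightarrow> (AE x in M. x \<notin> E_set M \<Psi> m \<longrightarrow> f x = 0)"
    if f: "f \<in> borel_measurable M" for f :: "'a \<Rightarrow> complex"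
  proof -
    define A where "A = {x \<in> space M. f x \<noteq> 0}"
    have A: "A \<in> sets M" unfolding A_def using f by measurable
    have "(AE x in M. f ((\<Psi> ^^ m) x) = 0) \<longleftrightarrow> emeasure M ((\<Psi> ^^ m) -` A \<inter> space M) = 0"
    proof -
      have "(\<Psi> ^^ m) -` A \<inter> space M = {x \<in> space M. f ((\<Psi> ^^ m) x) \<noteq> 0}"
        unfolding A_def using measurable_space[OF Pm] by auto
      moreover have "{x \<in> space M. f ((\<Psi> ^^ m) x) \<noteq> 0} \<in> sets M"
        using f Pm by measurable
      ultimately show ?thesis by (simp add: AE_iff_measurable[OF _ refl])
    qed
    also have "\<dots> \<longleftrightarrow> emeasure ?N A = 0" using A Pm by (simp add: emeasure_distr)
    also have "\<dots> \<longleftrightarrow> emeasure (density M (RN_iter M \<Psi> m)) A = 0" using dens by simp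
    also have "\<dots> \<longleftrightarrow> (AE x in M. x \<in> A \<longrightarrow> RN_iter M \<Psi> m x = 0)"
    proof -
      have "emeasure (density M (RN_iter M \<Psi> m)) A = (\<integral>\<^sup>+ x. RN_iter M \<Psi> m x * indicator A x \<partial>M)"
        using emeasure_density[OF RNm A] by simp
      moreover have "(\<integral>\<^sup>+ x. RN_iter M \<Psi> m x * indicator A x \<partial>M) = 0 \<longleftrightarrow>
          (AE x in M. RN_iter M \<Psi> m x * indicator A x = 0)"
        using RNm A by (intro nn_integral_0_iff_AE borel_measurable_times_ennreal borel_measurable_indicator)
      moreover have "(AE x in M. RN_iter M \<Psi> m x * indicator A x = 0) \<longleftrightarrow>
          (AE x in M. x \<in> A \<longrightarrow> RN_iter M \<Psi> m x = 0)"
        by (intro AE_cong) (auto simp: indicator_def)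
      ultimately show ?thesis by simp
    qed
    also have "\<dots> \<longleftrightarrow> (AE x in M. x \<notin> E_set M \<Psi> m \<longrightarrow> f x = 0)"
      unfolding A_def E_set_def by (intro AE_cong) auto
    finally show ?thesis .
  qed
  show ?thesis
    unfolding comp_kernel_def OL_on_def using key unfolding in_OL_def by blast
qed

end
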